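(* Let $0<\alpha<2$, $\alpha\neq 1$ or $\alpha=1$, let $\beta\in[-1,1]$, let $d\ge 1$ be an integer and $v\in\mathbb{R}$. Let $g_{\alpha,d}(v,\beta)$, $\beta_B$, $\theta_B$ and $h^{n}(\cdot\,;\alpha,\beta)$ be as defined in the context. Put $x=\left(\cos\left(\tfrac{\pi}{2}\alpha\theta_B\right)\right)^{1/\alpha}v$ (for $\alpha\neq1$) and $y=\tfrac{\pi}{2}v+\beta\log\tfrac{\pi}{2}$ (for $\alpha=1$). Then $$ g_{\alpha,d}(v,\beta)=\begin{cases} \mathrm{Re}\ \dfrac{\left(\cos\left(\frac{\pi}{2}\alpha\theta_B\right)\right)^{d/\alpha}}{2^d(\pi i)^{d-1}}\, h^{d-1}(|x|;\alpha,\beta_B^\ast), & \alpha\neq 1,\\[2mm] \mathrm{Re}\ \dfrac{\pi}{4^d i^{d-1}}\, h^{d-1}(y^\ast;1,|\beta|), & \alpha=1, \end{cases} $$ where $\beta_B^\ast=\beta_B\,\mathrm{sign}\,x$ and $y^\ast=y\,\mathrm{sign}\,\beta$, with the convention $\mathrm{sign}(w)=1$ for $w\ge 0$ and $\mathrm{sign}(w)=-1$ for $w<0$.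
   Context: For $0<\alpha<2$, $\beta\in[-1,1]$, integer $d\ge1$ and $v\in\mathbb{R}$ define $$ g_{\alpha,d}(v,\beta)=\begin{cases}\frac{1}{(2\pi)^d}\int_0^\infty \cos\left(vu-\left(\beta\tan\frac{\pi\alpha}{2}\right)u^\alpha\right)u^{d-1}e^{-u^\alpha}\,du, & \alpha\neq1,\\ \frac{1}{(2\pi)^d}\int_0^\infty\cos\left(vu+\frac{2}{\pi}\beta u\log u\right)u^{d-1}e^{-u}\,du, & \alpha=1.\end{cases} $$ Let $K(\alpha)=\alpha-1+\mathrm{sign}(1-\alpha)$ for $\alpha\ne1$. For $\alpha\neq1$ set $\beta_B=\frac{2}{\pi K(\alpha)}\arctan\left(\beta\tan\frac{\pi\alpha}{2}\right)$ and $\theta_B=\beta_BK(\alpha)/\alpha$. For a parameter $\beta\in[-1,1]$ and $\alpha\neq1$ put $\theta=\theta(\beta)=\beta K(\alpha)/\alpha$. For real $z>0$ define $$ \psi(z;\alpha,\beta)=\begin{cases}-z^\alpha\exp\left(-i\frac{\pi}{2}\theta\alpha\right),&\alpha\ne1,\\ -\frac{\pi}{2}z-i\beta z\log z,&\alpha=1,\end{cases} $$ (with $\theta=\beta K(\alpha)/\alpha$ computed from the third argument of $\psi$), and for integer $n\ge0$ and real $x$, $$ h^n(x;\alpha,\beta)=\frac{1}{\pi}\int_0^\infty (iz)^n\exp\left(izx+\psi(z;\alpha,-\beta)\right)dz . $$ *)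

theory Defs
  imports "HOL-Analysis.Analysis"
begin

definition sgnp :: "real \<Rightarrow> real" where
  "sgnp w = (if w \<ge> 0 then 1 else -1)"

text \<open>K(alpha) = alpha - 1 + sign(1 - alpha), used only for alpha \<noteq> 1.\<close>
definition Kfun :: "real \<Rightarrow> real" where
  "Kfun \<alpha> = \<alpha> - 1 + sgn (1 - \<alpha>)"

definition g_fun :: "real \<Rightarrow> nat \<Rightarrow> real \<Rightarrow> real \<Rightarrow> real" where
  "g_fun \<alpha> d v \<beta> =
    (if \<alpha> \<noteq> 1 then
       (1 / (2 * pi) ^ d) *
       (LINT u:{0<..}|lborel. cos (v * u - (\<beta> * tan (pi * \<alpha> / 2)) * u powr \<alpha>)
                              * u ^ (d - 1) * exp (- (u powr \<alpha>)))
     else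
       (1 / (2 * pi) ^ d) *
       (LINT u:{0<..}|lborel. cos (v * u + (2 / pi) * \<beta> * u * ln u)
                              * u ^ (d - 1) * exp (- u)))"

definition beta_B :: "real \<Rightarrow> real \<Rightarrow> real" where
  "beta_B \<alpha> \<beta> = 2 / (pi * Kfun \<alpha>) * arctan (\<beta> * tan (pi * \<alpha> / 2))"

definition theta_B :: "real \<Rightarrow> real \<Rightarrow> real" where
  "theta_B \<alpha> \<beta> = beta_B \<alpha> \<beta> * Kfun \<alpha> / \<alpha>"

definition psi :: "real \<Rightarrow> real \<Rightarrow> real \<Rightarrow> complex" where
  "psi z \<alpha> \<beta> =
    (if \<alpha> \<noteq> 1 then
       - complex_of_real (z powr \<alpha>) *
         exp (- \<i> * complex_of_real (pi / 2 * (\<beta> * Kfun \<alpha> / \<alpha>) * \<alpha>))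
     else
       - complex_of_real (pi / 2 * z) - \<i> * complex_of_real (\<beta> * z * ln z))"

definition h_fun :: "nat \<Rightarrow> real \<Rightarrow> real \<Rightarrow> real \<Rightarrow> complex" where
  "h_fun n x \<alpha> \<beta> =
    complex_of_real (1 / pi) *
    (LINT z:{0<..}|lborel. (\<i> * complex_of_real z) ^ n *
        exp (\<i> * complex_of_real (z * x) + psi z \<alpha> (- \<beta>)))"

end

theory Submission
  imports Defs
begin


lemma exp_pow_bound:
  fixes y :: real and k :: nat
  assumes "y \<ge> 0" "k > 0"
  shows "(y / k) ^ k \<le> exp y"
proof -
  have "(y / k) ^ k \<le> (1 + y / k) ^ k"
    using assms by (intro power_mono) auto
  also have "\<dots> \<le> exp y"
    using assms by (intro exp_ge_one_plus_x_over_n_power_n) auto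
  finally show ?thesis .
qed

lemma pt_bound:
  fixes a p x :: real and n k :: nat
  assumes a: "a > 0" and p: "p > 0" and k: "real n + 2 \<le> p * k" "k > 0" and x1: "x \<ge> 1"
  shows "x ^ n * exp (- a * x powr p) \<le> (k / a) ^ k * x powr (-2)"
proof -
  have e: "(a * x powr p / k) ^ k \<le> exp (a * x powr p)"
    using a k x1 by (intro exp_pow_bound) auto
  have "(a * x powr p / k) ^ k = (a / k) ^ k * (x powr p) ^ k"
    by (simp add: power_mult_distrib power_divide)
  also have "(x powr p) ^ k = x powr (p * k)"
    using x1 by (simp add: powr_powr[symmetric] powr_realpow)
  finally have e2: "(a / k) ^ k * x powr (p * k) \<le> exp (a * x powr p)" using e by simp
  have "x ^ n * x powr 2 = x powr (real n + 2)"
    using x1 by (simp add: powr_add powr_realpow)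
  also have "\<dots> \<le> x powr (p * k)" using x1 k by (intro powr_mono) auto
  finally have x3: "x ^ n * x powr 2 \<le> x powr (p * k)" .
  have pos: "(a / k) ^ k > 0" using a k by auto
  have "(a / k) ^ k * (x ^ n * x powr 2) \<le> exp (a * x powr p)"
    using x3 e2 pos by (meson mult_left_mono less_imp_le order_trans)
  hence "x ^ n * x powr 2 \<le> exp (a * x powr p) / (a / k) ^ k"
    by (simp only: pos_le_divide_eq[OF pos] mult.commute)
  moreover have x2: "x powr 2 > 0" using x1 by simp
  ultimately have "x ^ n \<le> exp (a * x powr p) / (a / k) ^ k / x powr 2"
    by (simp only: pos_le_divide_eq[OF x2])
  also have "\<dots> = (k / a) ^ k * x powr (-2) * exp (a * x powr p)"
    by (simp add: powr_minus power_divide field_simps)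
  finally have "x ^ n \<le> (k / a) ^ k * x powr (-2) * exp (a * x powr p)" .
  thus ?thesis
    by (simp add: exp_minus field_simps)
qed



lemma powr_m2_integrable: "set_integrable lborel {1..} (\<lambda>z::real. z powr (-2))"
proof -
  have "(\<lambda>z::real. z powr (-2)) integrable_on {1..}"
    using has_integral_powr_to_inf[of "-2" 1] by (auto simp: integrable_on_def)
  hence "(\<lambda>z::real. z powr (-2)) absolutely_integrable_on {1..}"
    by (rule nonnegative_absolutely_integrable_1) auto
  hence "integrable lebesgue (\<lambda>z::real. indicator {1..} z *\<^sub>R z powr (-2))"
    by (simp add: set_integrable_def)
  hence "integrable lborel (\<lambda>z::real. indicator {1..} z *\<^sub>R z powr (-2))"
    by (subst (asm) integrable_completion) auto
  thus ?thesis by (simp add: set_integrable_def)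
qed

lemma key_integrable:
  fixes a p :: real and n :: nat
  assumes a: "a > 0" and p: "p > 0"
  shows "set_integrable lborel {0<..} (\<lambda>z::real. z ^ n * exp (- a * z powr p))"
proof -
  have m: "set_borel_measurable lborel A (\<lambda>z::real. z ^ n * exp (- a * z powr p))" if [measurable]: "A \<in> sets borel" for A
    unfolding set_borel_measurable_def by measurable
  have c1: "set_integrable lborel {0..1} (\<lambda>z::real. 1::real)"
    unfolding set_integrable_def
    by (rule borel_integrable_compact) (auto intro: continuous_on_const)
  have i1: "set_integrable lborel {0..1} (\<lambda>z::real. z ^ n * exp (- a * z powr p))"
  proof (rule set_integrable_bound[OF c1 m[of "{0..1}", OF borel_closed[OF closed_atLeastAtMost]]])
    show "AE x in lborel. x \<in> {0..1} \<longrightarrow> norm (x ^ n * exp (- a * x powr p)) \<le> norm (1::real)"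
    proof (rule AE_I2, rule impI)
      fix x :: real assume x: "x \<in> {0..1}"
      have "x ^ n \<le> 1" using x by (auto intro: power_le_one)
      moreover have "exp (- a * x powr p) \<le> 1" using x a by auto
      moreover have "0 \<le> x ^ n" using x by simp
      ultimately have "x ^ n * exp (- a * x powr p) \<le> 1"
        by (intro mult_le_one) auto
      moreover have "0 \<le> x ^ n * exp (- a * x powr p)" using x by simp
      ultimately show "norm (x ^ n * exp (- a * x powr p)) \<le> norm (1::real)"
        by simp
    qed
  qed
  obtain k :: nat where k: "real n + 2 \<le> p * k" "k > 0"
  proof -
    obtain k :: nat where k0: "(real n + 2) / p \<le> real k" using real_arch_simple by metis
    have "real n + 2 \<le> p * real k" using k0 p by (simp add: pos_divide_le_eq mult.commute)
    hence "real n + 2 \<le> p * real (k+1)" using p by (simp add: algebra_simps)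
    then show ?thesis by (rule that) simp
  qed
  define C where "C = (k / a) ^ k"
  have c2: "set_integrable lborel {1..} (\<lambda>z::real. C * z powr (-2))"
    by (rule set_integrable_mult_right) (rule powr_m2_integrable)
  have i2: "set_integrable lborel {1..} (\<lambda>z::real. z ^ n * exp (- a * z powr p))"
  proof (rule set_integrable_bound[OF c2 m[of "{1..}", OF borel_closed[OF closed_atLeast]]])
    show "AE x in lborel. x \<in> {1..} \<longrightarrow> norm (x ^ n * exp (- a * x powr p)) \<le> norm (C * x powr (-2))"
    proof (rule AE_I2, rule impI)
      fix x :: real assume x: "x \<in> {1..}"
      hence x1: "x \<ge> 1" by auto
      have "x ^ n * exp (- a * x powr p) \<le> C * x powr (-2)"
        unfolding C_def using pt_bound[OF a p k x1] .
      moreover have "0 \<le> x ^ n * exp (- a * x powr p)" using x1 by simp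
      ultimately show "norm (x ^ n * exp (- a * x powr p)) \<le> norm (C * x powr (-2))"
        by simp
    qed
  qed
  have "set_integrable lborel ({0..1} \<union> {1..}) (\<lambda>z::real. z ^ n * exp (- a * z powr p))"
    by (rule set_integrable_Un[OF i1 i2]) simp_all
  thus ?thesis by (rule set_integrable_subset) auto
qed




lemma lint_scale:
  fixes f :: "real \<Rightarrow> real" and c :: real
  assumes c: "c > 0"
  shows "(LINT u:{0<..}|lborel. f u) = c * (LINT z:{0<..}|lborel. f (c * z))"
proof -
  have "(LINT u:{0<..}|lborel. f u) = \<bar>c\<bar> *\<^sub>R (\<integral>z. indicator {0<..} (0 + c * z) *\<^sub>R f (0 + c * z) \<partial>lborel)"
    unfolding set_lebesgue_integral_def using c
    by (rule lborel_integral_real_affine[where t=0, OF less_imp_neq[symmetric]])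
  also have "(\<lambda>z. indicator {0<..} (0 + c * z) *\<^sub>R f (0 + c * z)) = (\<lambda>z. indicator {0<..} z *\<^sub>R f (c * z))"
    using c by (auto simp: indicator_def zero_less_mult_iff fun_eq_iff)
  finally show ?thesis using c by (simp add: set_lebesgue_integral_def)
qed

lemma Re_lint_eq:
  fixes F :: "real \<Rightarrow> complex" and G :: "real \<Rightarrow> real"
  assumes a: "a > 0" and p: "p > 0" and Fm: "F \<in> borel_measurable borel"
    and bnd: "\<And>z. z > 0 \<Longrightarrow> norm (F z) \<le> M * (z ^ n * exp (- a * z powr p))"
    and re: "\<And>z. z > 0 \<Longrightarrow> Re (F z) = G z"
  shows "Re (LINT z:{0<..}|lborel. F z) = (LINT z:{0<..}|lborel. G z)"
proof -
  have int: "set_integrable lborel {0<..} F"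
  proof (rule set_integrable_bound[where f="\<lambda>z. M * (z ^ n * exp (- a * z powr p))"])
    show "set_integrable lborel {0<..} (\<lambda>z. M * (z ^ n * exp (- a * z powr p)))"
      by (rule set_integrable_mult_right) (rule key_integrable[OF a p])
    show "set_borel_measurable lborel {0<..} F"
      unfolding set_borel_measurable_def using Fm by measurable
    show "AE x in lborel. x \<in> {0<..} \<longrightarrow> norm (F x) \<le> norm (M * (x ^ n * exp (- a * x powr p)))"
    proof (rule AE_I2, rule impI)
      fix x :: real assume "x \<in> {0<..}"
      hence "norm (F x) \<le> M * (x ^ n * exp (- a * x powr p))" using bnd by auto
      thus "norm (F x) \<le> norm (M * (x ^ n * exp (- a * x powr p)))"
        by (smt (verit) real_norm_def)
    qed
  qed
  have "Re (LINT z:{0<..}|lborel. F z) = (LINT z:{0<..}|lborel. Re (F z))"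
    using int unfolding set_lebesgue_integral_def set_integrable_def
    by (simp add: integral_Re[symmetric])
  also have "\<dots> = (LINT z:{0<..}|lborel. G z)"
    by (rule set_lebesgue_integral_cong) (auto simp: re)
  finally show ?thesis .
qed




lemma pt_complex:
  fixes m :: nat and z r A B :: real and Kc w :: complex
  assumes "Kc * (\<i> * of_real z) ^ m = of_real r" and "w = Complex A B"
  shows "Re (Kc * ((\<i> * of_real z) ^ m * exp w)) = r * exp A * cos B"
    and "norm (Kc * ((\<i> * of_real z) ^ m * exp w)) = \<bar>r\<bar> * exp A"
proof -
  have e: "Kc * ((\<i> * of_real z) ^ m * exp w) = of_real r * exp w"
    using assms(1) by (simp add: mult.assoc[symmetric])
  show "Re (Kc * ((\<i> * of_real z) ^ m * exp w)) = r * exp A * cos B"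
    unfolding e unfolding assms(2) exp_Complex by simp
  show "norm (Kc * ((\<i> * of_real z) ^ m * exp w)) = \<bar>r\<bar> * exp A"
    unfolding e by (simp add: norm_mult norm_exp_eq_Re assms(2))
qed

lemma const_eq:
  fixes C z :: real and m d :: nat
  shows "complex_of_real C / (2 ^ d * (complex_of_real pi * \<i>) ^ m) * complex_of_real (1 / pi)
          * (\<i> * complex_of_real z) ^ m = complex_of_real (C * z ^ m / (2 ^ d * pi ^ Suc m))"
proof -
  have "(complex_of_real pi * \<i>) ^ m = complex_of_real (pi ^ m) * \<i> ^ m"
    by (simp add: power_mult_distrib)
  moreover have "(\<i> * complex_of_real z) ^ m = \<i> ^ m * complex_of_real (z ^ m)"
    by (simp add: power_mult_distrib)
  moreover have "\<i> ^ m \<noteq> 0" by simp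
  ultimately show ?thesis
    by (simp add: field_simps)
qed




lemma Kfun_nz: assumes "0 < \<alpha>" "\<alpha> < 2" "\<alpha> \<noteq> 1" shows "Kfun \<alpha> \<noteq> 0"
  using assms by (cases "\<alpha> < 1") (auto simp: Kfun_def sgn_if)

lemma case_ne1:
  fixes \<alpha> \<beta> v :: real and d :: nat
  assumes a0: "0 < \<alpha>" and a2: "\<alpha> < 2" and a1: "\<alpha> \<noteq> 1" and d: "1 \<le> d"
  shows "g_fun \<alpha> d v \<beta> =
              Re (complex_of_real ((cos (pi / 2 * \<alpha> * theta_B \<alpha> \<beta>)) powr (real d / \<alpha>))
                  / (2 ^ d * (complex_of_real pi * \<i>) ^ (d - 1))
                  * h_fun (d - 1) \<bar>(cos (pi / 2 * \<alpha> * theta_B \<alpha> \<beta>)) powr (1 / \<alpha>) * v\<bar> \<alpha>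
                     (beta_B \<alpha> \<beta> * sgnp ((cos (pi / 2 * \<alpha> * theta_B \<alpha> \<beta>)) powr (1 / \<alpha>) * v)))"
proof -
  obtain m where dm: "d = Suc m" using d by (cases d) auto
  define t where "t = \<beta> * tan (pi * \<alpha> / 2)"
  define \<phi> where "\<phi> = arctan t"
  define c where "c = cos \<phi>"
  have K: "Kfun \<alpha> \<noteq> 0" using Kfun_nz a0 a1 a2 by blast
  have th: "pi / 2 * \<alpha> * theta_B \<alpha> \<beta> = \<phi>"
    unfolding theta_B_def beta_B_def \<phi>_def t_def using K a0 by (simp add: field_simps)
  have c0: "c > 0" unfolding c_def \<phi>_def cos_arctan by (simp add: add_pos_nonneg)
  have sphi: "sin \<phi> = t * c" unfolding c_def \<phi>_def cos_arctan sin_arctan by simp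
  define l where "l = c powr (1 / \<alpha>)"
  have l0: "l > 0" unfolding l_def using c0 by simp
  have lal: "l powr \<alpha> = c" unfolding l_def using c0 a0 by (simp add: powr_powr)
  have ld: "l ^ d = c powr (real d / \<alpha>)"
    unfolding l_def using c0 by (simp add: powr_powr powr_realpow[symmetric])
  define x where "x = l * v"
  define s where "s = sgnp x"
  have s: "s = 1 \<or> s = -1" unfolding s_def sgnp_def by auto
  have absx: "\<bar>x\<bar> = s * x" unfolding s_def sgnp_def by auto
  have bB: "pi / 2 * (- (beta_B \<alpha> \<beta> * s) * Kfun \<alpha> / \<alpha>) * \<alpha> = - (s * \<phi>)"
    using th a0 unfolding theta_B_def by (simp add: field_simps)
  define I where "I = (LINT z:{0<..}|lborel. cos (x * z - sin \<phi> * z powr \<alpha>) * z ^ m * exp (- c * z powr \<alpha>))"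
  have "g_fun \<alpha> d v \<beta> = 1 / (2 * pi) ^ d *
      (LINT u:{0<..}|lborel. cos (v * u - t * u powr \<alpha>) * u ^ m * exp (- (u powr \<alpha>)))"
    unfolding g_fun_def t_def using a1 dm by simp
  also have "(LINT u:{0<..}|lborel. cos (v * u - t * u powr \<alpha>) * u ^ m * exp (- (u powr \<alpha>)))
     = l * (LINT z:{0<..}|lborel. cos (v * (l * z) - t * (l * z) powr \<alpha>) * (l * z) ^ m * exp (- ((l * z) powr \<alpha>)))"
    by (rule lint_scale[OF l0])
  also have "(LINT z:{0<..}|lborel. cos (v * (l * z) - t * (l * z) powr \<alpha>) * (l * z) ^ m * exp (- ((l * z) powr \<alpha>)))
      = (LINT z:{0<..}|lborel. l ^ m * (cos (x * z - sin \<phi> * z powr \<alpha>) * z ^ m * exp (- c * z powr \<alpha>)))"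
  proof (rule set_lebesgue_integral_cong, simp, intro allI impI)
    fix z :: real assume "z \<in> {0<..}"
    hence z: "z > 0" by simp
    have p: "(l * z) powr \<alpha> = c * z powr \<alpha>" using l0 z lal by (simp add: powr_mult)
    show "cos (v * (l * z) - t * (l * z) powr \<alpha>) * (l * z) ^ m * exp (- ((l * z) powr \<alpha>)) =
          l ^ m * (cos (x * z - sin \<phi> * z powr \<alpha>) * z ^ m * exp (- c * z powr \<alpha>))"
      unfolding p sphi x_def by (simp add: power_mult_distrib algebra_simps)
  qed
  also have "\<dots> = l ^ m * I" unfolding I_def by simp
  finally have L0: "g_fun \<alpha> d v \<beta> = 1 / (2 * pi) ^ d * (l * (l ^ m * I))" .
  have ll: "l * l ^ m = c powr (real d / \<alpha>)" using ld dm by simp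
  have L: "g_fun \<alpha> d v \<beta> = c powr (real d / \<alpha>) / (2 * pi) ^ d * I"
    unfolding L0 ll[symmetric] by simp
  define Kc where "Kc = complex_of_real (c powr (real d / \<alpha>)) / (2 ^ d * (complex_of_real pi * \<i>) ^ m)
          * complex_of_real (1 / pi)"
  define E where "E = exp (\<i> * complex_of_real (s * \<phi>))"
  define F where "F = (\<lambda>z::real. (\<i> * complex_of_real z) ^ m *
        exp (\<i> * complex_of_real (z * \<bar>x\<bar>) - complex_of_real (z powr \<alpha>) * E))"
  have h: "h_fun m \<bar>x\<bar> \<alpha> (beta_B \<alpha> \<beta> * s) = complex_of_real (1 / pi) * (LINT z:{0<..}|lborel. F z)"
    unfolding h_fun_def psi_def F_def E_def using a1 bB by simp
  have RHS: "complex_of_real (c powr (real d / \<alpha>)) / (2 ^ d * (complex_of_real pi * \<i>) ^ m)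
      * h_fun m \<bar>x\<bar> \<alpha> (beta_B \<alpha> \<beta> * s) = (LINT z:{0<..}|lborel. Kc * F z)"
    unfolding h Kc_def by (simp add: mult.assoc)
  have Eeq: "E = Complex c (s * sin \<phi>)"
    unfolding E_def c_def using s by (auto simp: complex_eq_iff Re_exp Im_exp)
  have ptK: "Kc * (\<i> * complex_of_real z) ^ m = complex_of_real (c powr (real d / \<alpha>) * z ^ m / (2 ^ d * pi ^ Suc m))" for z
    unfolding Kc_def by (rule const_eq)
  have wz: "\<i> * complex_of_real (z * \<bar>x\<bar>) - complex_of_real (z powr \<alpha>) * E
       = Complex (- c * z powr \<alpha>) (z * \<bar>x\<bar> - z powr \<alpha> * (s * sin \<phi>))" for z
    unfolding Eeq by (simp add: complex_eq_iff)
  have cs: "cos (z * \<bar>x\<bar> - z powr \<alpha> * (s * sin \<phi>)) = cos (x * z - sin \<phi> * z powr \<alpha>)" for z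
  proof (cases "s = 1")
    case True
    hence "z * \<bar>x\<bar> - z powr \<alpha> * (s * sin \<phi>) = x * z - sin \<phi> * z powr \<alpha>"
      using absx by (simp add: algebra_simps)
    thus ?thesis by simp
  next
    case False
    hence s1: "s = -1" using s by simp
    hence "z * \<bar>x\<bar> - z powr \<alpha> * (s * sin \<phi>) = - (x * z - sin \<phi> * z powr \<alpha>)"
      using absx by (simp add: algebra_simps)
    thus ?thesis by (simp only: cos_minus)
  qed
  have "Re (LINT z:{0<..}|lborel. Kc * F z) = (LINT z:{0<..}|lborel. c powr (real d / \<alpha>) / (2 * pi) ^ d *
           (cos (x * z - sin \<phi> * z powr \<alpha>) * z ^ m * exp (- c * z powr \<alpha>)))"
  proof (rule Re_lint_eq[OF c0 a0, where n=m and M="c powr (real d / \<alpha>) / (2 ^ d * pi ^ Suc m)"])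
    show "(\<lambda>z. Kc * F z) \<in> borel_measurable borel" unfolding F_def by measurable
    fix z :: real assume z: "z > 0"
    show "norm (Kc * F z) \<le> c powr (real d / \<alpha>) / (2 ^ d * pi ^ Suc m) * (z ^ m * exp (- c * z powr \<alpha>))"
    proof -
      have nn: "0 \<le> c powr (real d / \<alpha>) * z ^ m / (2 ^ d * pi ^ Suc m)" using z by simp
      show ?thesis unfolding F_def pt_complex(2)[OF ptK wz] abs_of_nonneg[OF nn]
        by (simp add: divide_simps)
    qed
    show "Re (Kc * F z) = c powr (real d / \<alpha>) / (2 * pi) ^ d * (cos (x * z - sin \<phi> * z powr \<alpha>) * z ^ m * exp (- c * z powr \<alpha>))"
    proof -
      have pp: "(2 * pi) ^ d = 2 ^ d * pi ^ Suc m" using dm by (simp only: power_mult_distrib)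
      show ?thesis unfolding F_def pt_complex(1)[OF ptK wz] cs pp
        by (simp add: mult_ac)
    qed
  qed
  also have "\<dots> = c powr (real d / \<alpha>) / (2 * pi) ^ d * I" unfolding I_def by simp
  finally have R: "Re (complex_of_real (c powr (real d / \<alpha>)) / (2 ^ d * (complex_of_real pi * \<i>) ^ m)
      * h_fun m \<bar>x\<bar> \<alpha> (beta_B \<alpha> \<beta> * s)) = c powr (real d / \<alpha>) / (2 * pi) ^ d * I"
    unfolding RHS .
  have eqs: "cos (pi / 2 * \<alpha> * theta_B \<alpha> \<beta>) = c" unfolding th c_def by (rule refl)
  have dm1: "d - 1 = m" using dm by simp
  show ?thesis unfolding eqs l_def[symmetric] x_def[symmetric] s_def[symmetric] dm1
    using L R by simp
qed




lemma case_1: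
  fixes \<beta> v :: real and d :: nat
  assumes d: "1 \<le> d"
  shows "g_fun 1 d v \<beta> =
              Re (complex_of_real pi / (4 ^ d * \<i> ^ (d - 1))
                  * h_fun (d - 1) ((pi / 2 * v + \<beta> * ln (pi / 2)) * sgnp \<beta>) 1 \<bar>\<beta>\<bar>)"
proof -
  obtain m where dm: "d = Suc m" using d by (cases d) auto
  define l where "l = pi / 2"
  have l0: "l > 0" unfolding l_def by simp
  define y where "y = pi / 2 * v + \<beta> * ln (pi / 2)"
  define s where "s = sgnp \<beta>"
  have s: "s = 1 \<or> s = -1" unfolding s_def sgnp_def by auto
  have absb: "\<bar>\<beta>\<bar> = s * \<beta>" unfolding s_def sgnp_def by auto
  define I where "I = (LINT z:{0<..}|lborel. cos (y * z + \<beta> * z * ln z) * z ^ m * exp (- l * z))"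
  have "g_fun 1 d v \<beta> = 1 / (2 * pi) ^ d *
      (LINT u:{0<..}|lborel. cos (v * u + (2 / pi) * \<beta> * u * ln u) * u ^ m * exp (- u))"
    unfolding g_fun_def using dm by simp
  also have "(LINT u:{0<..}|lborel. cos (v * u + (2 / pi) * \<beta> * u * ln u) * u ^ m * exp (- u))
     = l * (LINT z:{0<..}|lborel. cos (v * (l * z) + (2 / pi) * \<beta> * (l * z) * ln (l * z)) * (l * z) ^ m * exp (- (l * z)))"
    by (rule lint_scale[OF l0])
  also have "(LINT z:{0<..}|lborel. cos (v * (l * z) + (2 / pi) * \<beta> * (l * z) * ln (l * z)) * (l * z) ^ m * exp (- (l * z)))
      = (LINT z:{0<..}|lborel. l ^ m * (cos (y * z + \<beta> * z * ln z) * z ^ m * exp (- l * z)))"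
  proof (rule set_lebesgue_integral_cong, simp, intro allI impI)
    fix z :: real assume "z \<in> {0<..}"
    hence z: "z > 0" by simp
    have ph: "v * (l * z) + (2 / pi) * \<beta> * (l * z) * ln (l * z) = y * z + \<beta> * z * ln z"
    proof -
      have lnlz: "ln (l * z) = ln l + ln z" using l0 z by (simp add: ln_mult)
      show ?thesis unfolding lnlz unfolding y_def l_def by (simp add: field_simps)
    qed
    show "cos (v * (l * z) + (2 / pi) * \<beta> * (l * z) * ln (l * z)) * (l * z) ^ m * exp (- (l * z)) =
          l ^ m * (cos (y * z + \<beta> * z * ln z) * z ^ m * exp (- l * z))"
      unfolding ph by (simp add: power_mult_distrib algebra_simps)
  qed
  also have "\<dots> = l ^ m * I" unfolding I_def by simp
  finally have L0: "g_fun 1 d v \<beta> = 1 / (2 * pi) ^ d * (l * (l ^ m * I))" .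
  have ll: "l * l ^ m / (2 * pi) ^ d = 1 / 4 ^ d"
  proof -
    have "l * l ^ m / (2 * pi) ^ d = (l / (2 * pi)) ^ d" using dm by (simp add: power_divide)
    also have "l / (2 * pi) = 1 / 4" unfolding l_def by simp
    finally show ?thesis by (simp add: power_one_over)
  qed
  have L: "g_fun 1 d v \<beta> = 1 / 4 ^ d * I"
    unfolding L0 ll[symmetric] by simp
  define Kc where "Kc = complex_of_real pi / (4 ^ d * \<i> ^ m) * complex_of_real (1 / pi)"
  have psi1: "psi z 1 (- \<bar>\<beta>\<bar>) = - complex_of_real (l * z) + \<i> * complex_of_real (\<bar>\<beta>\<bar> * z * ln z)" for z
    unfolding psi_def l_def by simp
  define F where "F = (\<lambda>z::real. (\<i> * complex_of_real z) ^ m *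
        exp (\<i> * complex_of_real (z * (y * s)) + (- complex_of_real (l * z) + \<i> * complex_of_real (\<bar>\<beta>\<bar> * z * ln z))))"
  have h: "h_fun m (y * s) 1 \<bar>\<beta>\<bar> = complex_of_real (1 / pi) * (LINT z:{0<..}|lborel. F z)"
    unfolding h_fun_def psi1 F_def by (rule refl)
  have RHS: "complex_of_real pi / (4 ^ d * \<i> ^ m) * h_fun m (y * s) 1 \<bar>\<beta>\<bar> = (LINT z:{0<..}|lborel. Kc * F z)"
    unfolding h Kc_def by (simp add: mult.assoc)
  have ptK: "Kc * (\<i> * complex_of_real z) ^ m = complex_of_real (z ^ m / 4 ^ d)" for z
  proof -
    have "(\<i> * complex_of_real z) ^ m = \<i> ^ m * complex_of_real (z ^ m)"
      by (simp add: power_mult_distrib)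
    moreover have "\<i> ^ m \<noteq> 0" by simp
    ultimately show ?thesis unfolding Kc_def by (simp add: field_simps)
  qed
  have wz: "\<i> * complex_of_real (z * (y * s)) + (- complex_of_real (l * z) + \<i> * complex_of_real (\<bar>\<beta>\<bar> * z * ln z))
       = Complex (- l * z) (z * (y * s) + \<bar>\<beta>\<bar> * z * ln z)" for z
    by (simp add: complex_eq_iff)
  have cs: "cos (z * (y * s) + \<bar>\<beta>\<bar> * z * ln z) = cos (y * z + \<beta> * z * ln z)" for z
  proof (cases "s = 1")
    case True
    hence "z * (y * s) + \<bar>\<beta>\<bar> * z * ln z = y * z + \<beta> * z * ln z"
      using absb by (simp add: algebra_simps)
    thus ?thesis by simp
  next
    case False
    hence s1: "s = -1" using s by simp
    hence "z * (y * s) + \<bar>\<beta>\<bar> * z * ln z = - (y * z + \<beta> * z * ln z)"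
      using absb by (simp add: algebra_simps)
    thus ?thesis by (simp only: cos_minus)
  qed
  have "Re (LINT z:{0<..}|lborel. Kc * F z) = (LINT z:{0<..}|lborel. 1 / 4 ^ d *
           (cos (y * z + \<beta> * z * ln z) * z ^ m * exp (- l * z)))"
  proof (rule Re_lint_eq[OF l0 zero_less_one, where n=m and M="1 / 4 ^ d"])
    show "(\<lambda>z. Kc * F z) \<in> borel_measurable borel" unfolding F_def by measurable
    fix z :: real assume z: "z > 0"
    show "norm (Kc * F z) \<le> 1 / 4 ^ d * (z ^ m * exp (- l * z powr 1))"
    proof -
      have nn: "0 \<le> z ^ m / 4 ^ d" using z by simp
      show ?thesis unfolding F_def pt_complex(2)[OF ptK wz] abs_of_nonneg[OF nn]
        using z by simp
    qed
    show "Re (Kc * F z) = 1 / 4 ^ d * (cos (y * z + \<beta> * z * ln z) * z ^ m * exp (- l * z))"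
      unfolding F_def pt_complex(1)[OF ptK wz] cs by (simp add: mult_ac)
  qed
  also have "\<dots> = 1 / 4 ^ d * I" unfolding I_def by simp
  finally have R: "Re (complex_of_real pi / (4 ^ d * \<i> ^ m) * h_fun m (y * s) 1 \<bar>\<beta>\<bar>) = 1 / 4 ^ d * I"
    unfolding RHS .
  have dm1: "d - 1 = m" using dm by simp
  show ?thesis unfolding y_def[symmetric] s_def[symmetric] dm1
    using L R by simp
qed


theorem proposition1:
  fixes \<alpha> \<beta> v :: real and d :: nat
  assumes "0 < \<alpha>" and "\<alpha> < 2" and "-1 \<le> \<beta>" and "\<beta> \<le> 1" and "1 \<le> d"
  shows "(\<alpha> \<noteq> 1 \<longrightarrow>
           (let x = (cos (pi / 2 * \<alpha> * theta_B \<alpha> \<beta>)) powr (1 / \<alpha>) * v in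
            g_fun \<alpha> d v \<beta> =
              Re (complex_of_real ((cos (pi / 2 * \<alpha> * theta_B \<alpha> \<beta>)) powr (real d / \<alpha>))
                  / (2 ^ d * (complex_of_real pi * \<i>) ^ (d - 1))
                  * h_fun (d - 1) \<bar>x\<bar> \<alpha> (beta_B \<alpha> \<beta> * sgnp x))))
       \<and> (\<alpha> = 1 \<longrightarrow>
           (let y = pi / 2 * v + \<beta> * ln (pi / 2) in
            g_fun \<alpha> d v \<beta> =
              Re (complex_of_real pi / (4 ^ d * \<i> ^ (d - 1))
                  * h_fun (d - 1) (y * sgnp \<beta>) 1 \<bar>\<beta>\<bar>)))"
proof (intro conjI impI)
  assume "\<alpha> \<noteq> 1"
  thus "let x = (cos (pi / 2 * \<alpha> * theta_B \<alpha> \<beta>)) powr (1 / \<alpha>) * v in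
            g_fun \<alpha> d v \<beta> =
              Re (complex_of_real ((cos (pi / 2 * \<alpha> * theta_B \<alpha> \<beta>)) powr (real d / \<alpha>))
                  / (2 ^ d * (complex_of_real pi * \<i>) ^ (d - 1))
                  * h_fun (d - 1) \<bar>x\<bar> \<alpha> (beta_B \<alpha> \<beta> * sgnp x))"
    unfolding Let_def using case_ne1 assms by blast
next
  assume a: "\<alpha> = 1"
  show "let y = pi / 2 * v + \<beta> * ln (pi / 2) in
            g_fun \<alpha> d v \<beta> =
              Re (complex_of_real pi / (4 ^ d * \<i> ^ (d - 1))
                  * h_fun (d - 1) (y * sgnp \<beta>) 1 \<bar>\<beta>\<bar>)"
    unfolding Let_def a using case_1 assms(5) by blast
qed

end
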